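(* For any valid threshold vector $t$, any sparsified weight vector $\tilde w$ and any integral assignment $\sigma:J\to[m]$, the optimal value of the linear program minimizing $\mathrm{LP}_t(\tilde w;x,y,z)$ subject to (OLB1)–(OLB5) is at most $\sum_{i=1}^m h_t(\tilde w;\mathrm{load}_\sigma(i))$.
   Context: Jobs $J$, machines $[m]$, processing times $p_{ij}\ge0$; $\mathrm{load}_\sigma(i)=\sum_{j:\sigma(j)=i}p_{ij}$. Fix $\delta>0$ and $P=\{\min\{\lceil(1+\delta)^s\rceil,m\}:s\in\mathbb{Z}_{\ge0}\}$; for $\ell\in P$, $\mathrm{next}(\ell)$ is the smallest element of $P$ larger than $\ell$ if $\ell<m$, and $\mathrm{next}(m)=m+1$. A threshold vector $t\in\mathbb{R}^P$ (with $t_{m+1}:=0$) is valid if $t_\ell\ge t_{\mathrm{next}(\ell)}$ for all $\ell\in P$. A sparsified weight vector $\tilde w$ arises from a non-increasing $w\in\mathbb{R}^m_{\ge0}$ by $\tilde w_i=w_i$ for $i\in P$ and $\tilde w_i=w_{\mathrm{next}(\ell)}$ for $\ell\in P$, $\ell<i<\mathrm{next}(\ell)$; $\tilde w_{m+1}:=0$. $h_t(\tilde w;a)=\sum_{\ell\in P}(\tilde w_\ell-\tilde w_{\mathrm{next}(\ell)})(a-t_\ell)^+$. Variables $x_{ij},z^{(\ell)}_{ij},y^{(\ell)}_{ij}\ge0$ ($i\in[m],j\in J,\ell\in P$), $z^{(m+1)}_{ij}:=0$. (OLB1) $\sum_ix_{ij}=1$; (OLB2) $x_{ij}=z^{(\ell)}_{ij}+y^{(\ell)}_{ij}$;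 (OLB3) $z^{(\mathrm{next}(\ell))}_{ij}\le z^{(\ell)}_{ij}$; (OLB4) $\sum_jp_{ij}(z^{(\ell)}_{ij}-z^{(\mathrm{next}(\ell))}_{ij})\le t_\ell-t_{\mathrm{next}(\ell)}$; (OLB5) $p_{ij}y^{(\ell)}_{ij}\ge(p_{ij}-t_\ell)x_{ij}$, all for all applicable $i,j,\ell$. Objective $\mathrm{LP}_t(\tilde w;x,y,z)=\sum_i\sum_{\ell\in P}\sum_j(\tilde w_\ell-\tilde w_{\mathrm{next}(\ell)})p_{ij}y^{(\ell)}_{ij}$. *)

theory Defs
  imports Complex_Main
begin

text \<open>Machines are 1..m, jobs a finite set J. Indices l range over the sparsified set P.\<close>

definition Pset :: "real \<Rightarrow> nat \<Rightarrow> nat set" where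
  "Pset \<delta> m = {min (nat \<lceil>(1 + \<delta>) ^ s\<rceil>) m | s::nat. True}"

definition nxt :: "real \<Rightarrow> nat \<Rightarrow> nat \<Rightarrow> nat" where
  "nxt \<delta> m l = (if l < m then Min {l' \<in> Pset \<delta> m. l < l'} else m + 1)"

definition ext0 :: "nat \<Rightarrow> (nat \<Rightarrow> real) \<Rightarrow> nat \<Rightarrow> real" where
  "ext0 m t l = (if l = m + 1 then 0 else t l)"

definition valid_threshold :: "real \<Rightarrow> nat \<Rightarrow> (nat \<Rightarrow> real) \<Rightarrow> bool" where
  "valid_threshold \<delta> m t \<longleftrightarrow> (\<forall>l \<in> Pset \<delta> m. t l \<ge> ext0 m t (nxt \<delta> m l))"

definition sparsify :: "real \<Rightarrow> nat \<Rightarrow> (nat \<Rightarrow> real) \<Rightarrow> nat \<Rightarrow> real" where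
  "sparsify \<delta> m w i =
     (if i = m + 1 then 0
      else if i \<in> Pset \<delta> m then w i
      else w (nxt \<delta> m (Max {l \<in> Pset \<delta> m. l < i})))"

definition load :: "'j set \<Rightarrow> (nat \<Rightarrow> 'j \<Rightarrow> real) \<Rightarrow> ('j \<Rightarrow> nat) \<Rightarrow> nat \<Rightarrow> real" where
  "load J p \<sigma> i = (\<Sum>j \<in> {j \<in> J. \<sigma> j = i}. p i j)"

definition h_fun :: "real \<Rightarrow> nat \<Rightarrow> (nat \<Rightarrow> real) \<Rightarrow> (nat \<Rightarrow> real) \<Rightarrow> real \<Rightarrow> real" where
  "h_fun \<delta> m t wt a =
     (\<Sum>l \<in> Pset \<delta> m. (wt l - wt (nxt \<delta> m l)) * max 0 (a - t l))"

text \<open>Feasibility for (OLB1)-(OLB5) plus nonnegativity; x i j, z l i j, y l i j.\<close>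
definition olb_feasible ::
  "real \<Rightarrow> nat \<Rightarrow> 'j set \<Rightarrow> (nat \<Rightarrow> 'j \<Rightarrow> real) \<Rightarrow> (nat \<Rightarrow> real)
   \<Rightarrow> (nat \<Rightarrow> 'j \<Rightarrow> real) \<Rightarrow> (nat \<Rightarrow> nat \<Rightarrow> 'j \<Rightarrow> real) \<Rightarrow> (nat \<Rightarrow> nat \<Rightarrow> 'j \<Rightarrow> real) \<Rightarrow> bool" where
  "olb_feasible \<delta> m J p t x y z \<longleftrightarrow>
     (let P = Pset \<delta> m; nx = nxt \<delta> m;
          zz = (\<lambda>l i j. if l = m + 1 then 0 else z l i j) in
     (\<forall>i \<in> {1..m}. \<forall>j \<in> J. x i j \<ge> 0) \<and>
     (\<forall>l \<in> P. \<forall>i \<in> {1..m}. \<forall>j \<in> J. z l i j \<ge> 0 \<and> y l i j \<ge> 0) \<and>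
     (\<forall>j \<in> J. (\<Sum>i \<in> {1..m}. x i j) = 1) \<and>
     (\<forall>l \<in> P. \<forall>i \<in> {1..m}. \<forall>j \<in> J. x i j = z l i j + y l i j) \<and>
     (\<forall>l \<in> P. \<forall>i \<in> {1..m}. \<forall>j \<in> J. zz (nx l) i j \<le> z l i j) \<and>
     (\<forall>l \<in> P. \<forall>i \<in> {1..m}.
        (\<Sum>j \<in> J. p i j * (z l i j - zz (nx l) i j)) \<le> t l - ext0 m t (nx l)) \<and>
     (\<forall>l \<in> P. \<forall>i \<in> {1..m}. \<forall>j \<in> J. p i j * y l i j \<ge> (p i j - t l) * x i j))"

definition LP_obj ::
  "real \<Rightarrow> nat \<Rightarrow> 'j set \<Rightarrow> (nat \<Rightarrow> 'j \<Rightarrow> real) \<Rightarrow> (nat \<Rightarrow> real)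
   \<Rightarrow> (nat \<Rightarrow> nat \<Rightarrow> 'j \<Rightarrow> real) \<Rightarrow> real" where
  "LP_obj \<delta> m J p wt y =
     (\<Sum>i \<in> {1..m}. \<Sum>l \<in> Pset \<delta> m. \<Sum>j \<in> J.
        (wt l - wt (nxt \<delta> m l)) * p i j * y l i j)"

end

theory Submission
  imports Defs
begin

lemma Pset_sub: assumes "m \<ge> 1" "\<delta> > 0" shows "Pset \<delta> m \<subseteq> {1..m}"
proof
  fix l assume "l \<in> Pset \<delta> m"
  then obtain s::nat where l: "l = min (nat \<lceil>(1 + \<delta>) ^ s\<rceil>) m" unfolding Pset_def by auto
  have "(1::real) \<le> (1+\<delta>)^s" using assms by (simp add: one_le_power)
  then have "1 \<le> nat \<lceil>(1 + \<delta>) ^ s\<rceil>" by linarith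
  then show "l \<in> {1..m}" using l assms by auto
qed

lemma Pset_fin: assumes "m \<ge> 1" "\<delta> > 0" shows "finite (Pset \<delta> m)"
  using Pset_sub[OF assms] finite_subset by blast

lemma m_in: assumes "\<delta> > 0" shows "m \<in> Pset \<delta> m"
proof -
  obtain s where "real m < (1+\<delta>)^s" using real_arch_pow[of "1+\<delta>" "real m"] assms by auto
  then have "m \<le> nat \<lceil>(1 + \<delta>) ^ s\<rceil>" by linarith
  then have "m = min (nat \<lceil>(1 + \<delta>) ^ s\<rceil>) m" by simp
  then show ?thesis unfolding Pset_def by blast
qed

lemma nxt_props: assumes "m \<ge> 1" "\<delta> > 0" "l < m"
  shows "nxt \<delta> m l \<in> Pset \<delta> m \<and> l < nxt \<delta> m l \<and> nxt \<delta> m l \<le> m"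
proof -
  let ?S = "{l' \<in> Pset \<delta> m. l < l'}"
  have fin: "finite ?S" using Pset_fin[OF assms(1,2)] by auto
  have ne: "m \<in> ?S" using m_in[OF assms(2)] assms by auto
  have "Min ?S \<in> ?S" using fin ne Min_in by blast
  moreover have "Min ?S \<le> m" using fin ne by auto
  ultimately show ?thesis using assms unfolding nxt_def by auto
qed

lemma nxt_m: "nxt \<delta> m m = m + 1" unfolding nxt_def by simp

lemma t_nonneg: assumes "m \<ge> 1" "\<delta> > 0" "valid_threshold \<delta> m t"
  shows "\<forall>l \<in> Pset \<delta> m. t l \<ge> 0"
proof -
  have "\<forall>l \<in> Pset \<delta> m. m - l = k \<longrightarrow> t l \<ge> 0" for k
  proof (induction k rule: less_induct)
    case (less k)
    show ?case
    proof (intro ballI impI)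
      fix l assume l: "l \<in> Pset \<delta> m" "m - l = k"
      have lm: "l \<le> m" using Pset_sub[OF assms(1,2)] l by auto
      have v: "t l \<ge> ext0 m t (nxt \<delta> m l)" using assms(3) l unfolding valid_threshold_def by auto
      show "t l \<ge> 0"
      proof (cases "l = m")
        case True then show ?thesis using v by (simp add: nxt_m ext0_def)
      next
        case False
        then have "l < m" using lm by simp
        note n = nxt_props[OF assms(1,2) this]
        then have "t (nxt \<delta> m l) \<ge> 0" using less.IH[of "m - nxt \<delta> m l"] l by auto
        moreover have "ext0 m t (nxt \<delta> m l) = t (nxt \<delta> m l)" using n by (simp add: ext0_def)
        ultimately show ?thesis using v by simp
      qed
    qed
  qed
  then show ?thesis by blast
qed

theorem mainTheorem15:
  fixes J :: "'j set" and m :: nat and \<delta> :: real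
    and p :: "nat \<Rightarrow> 'j \<Rightarrow> real" and t :: "nat \<Rightarrow> real"
    and w :: "nat \<Rightarrow> real" and \<sigma> :: "'j \<Rightarrow> nat"
  assumes "finite J" and "m \<ge> 1" and "\<delta> > 0"
    and "\<forall>i \<in> {1..m}. \<forall>j \<in> J. p i j \<ge> 0"
    and "valid_threshold \<delta> m t"
    and "\<forall>i \<in> {1..m}. w i \<ge> 0"
    and "\<forall>i \<in> {1..m}. \<forall>i' \<in> {1..m}. i \<le> i' \<longrightarrow> w i' \<le> w i"
    and "\<forall>j \<in> J. \<sigma> j \<in> {1..m}"
  shows "Inf {LP_obj \<delta> m J p (sparsify \<delta> m w) y | x y z. olb_feasible \<delta> m J p t x y z}
           \<le> (\<Sum>i \<in> {1..m}. h_fun \<delta> m t (sparsify \<delta> m w) (load J p \<sigma> i))"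
proof -
  note fJ = assms(1) and m1 = assms(2) and d0 = assms(3) and pnn = assms(4)
  define P where "P = Pset \<delta> m"
  define wt where "wt = sparsify \<delta> m w"
  define L where "L i = load J p \<sigma> i" for i
  define x where "x i j = (if \<sigma> j = i then 1 else (0::real))" for i j
  define r where "r i l = (if L i \<le> t l then 1 else t l / L i)" for i l
  define z where "z l i j = r i l * x i j" for l i j
  define y where "y l i j = (1 - r i l) * x i j" for l i j
  have Psub: "P \<subseteq> {1..m}" using Pset_sub[OF m1 d0] P_def by simp
  have tnn: "\<forall>l\<in>P. t l \<ge> 0" using t_nonneg[OF m1 d0 assms(5)] P_def by simp
  have Lsum: "L i = (\<Sum>j\<in>J. p i j * x i j)" for i
    unfolding L_def load_def x_def using fJ by (simp add: sum.inter_filter[symmetric] if_distrib cong: if_cong)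
  have Lnn: "L i \<ge> 0" if "i \<in> {1..m}" for i
    unfolding L_def load_def using pnn that by (auto intro: sum_nonneg)
  have pleL: "p i j \<le> L i" if "i \<in> {1..m}" "j \<in> J" "\<sigma> j = i" for i j
  proof -
    have "p i j \<le> (\<Sum>j\<in>{j \<in> J. \<sigma> j = i}. p i j)"
      by (rule member_le_sum) (use that pnn fJ in auto)
    then show ?thesis unfolding L_def load_def .
  qed
  have r01: "0 \<le> r i l \<and> r i l \<le> 1" if "i \<in> {1..m}" "l \<in> P" for i l
    using tnn that Lnn[OF that(1)] by (auto simp: r_def divide_simps)
  have rL: "r i l * L i = min (L i) (t l)" if "i \<in> {1..m}" "l \<in> P" for i l
    using tnn that Lnn[OF that(1)] by (auto simp: r_def)
  have rmono: "r i l' \<le> r i l" if "i \<in> {1..m}" "l \<in> P" "l' \<in> P" "t l' \<le> t l" for i l l'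
    using tnn that Lnn[OF that(1)] by (auto simp: r_def divide_simps)
  have nxtP: "nxt \<delta> m l \<in> P \<and> l < nxt \<delta> m l \<and> nxt \<delta> m l \<le> m" if "l \<in> P" "l < m" for l
    using nxt_props[OF m1 d0 that(2)] P_def by simp
  have tmono: "t (nxt \<delta> m l) \<le> t l" if "l \<in> P" "l < m" for l
    using assms(5) that nxtP[OF that] unfolding valid_threshold_def ext0_def P_def by auto
  define tn where "tn l = (if l = m then 0 else t (nxt \<delta> m l))" for l
  define rn where "rn i l = (if l = m then 0 else r i (nxt \<delta> m l))" for i l
  have lm: "l \<le> m" if "l \<in> P" for l using Psub that by auto
  have ext: "ext0 m t (nxt \<delta> m l) = tn l" if "l \<in> P" for l
    using nxtP[of l] lm[OF that] that by (cases "l = m") (auto simp: ext0_def tn_def nxt_m)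
  have zzeq: "(if nxt \<delta> m l = m + 1 then 0 else z (nxt \<delta> m l) i j) = rn i l * x i j" if "l \<in> P" for l i j
    using nxtP[of l] lm[OF that] that by (cases "l = m") (auto simp: rn_def z_def nxt_m)
  have tn: "0 \<le> tn l \<and> tn l \<le> t l" if "l \<in> P" for l
    using nxtP[of l] lm[OF that] that tnn tmono[of l] by (cases "l = m") (auto simp: tn_def)
  have rn: "0 \<le> rn i l \<and> rn i l \<le> r i l \<and> rn i l * L i = min (L i) (tn l)" if "i \<in> {1..m}" "l \<in> P" for i l
  proof (cases "l = m")
    case True then show ?thesis using r01[OF that] Lnn[OF that(1)] tnn that by (auto simp: rn_def tn_def)
  next
    case False then have "l < m" using lm[OF that(2)] by simp
    then show ?thesis using r01[OF that(1), of "nxt \<delta> m l"] nxtP[of l] that False rL[of i "nxt \<delta> m l"]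
      rmono[OF that(1) that(2), of "nxt \<delta> m l"] tmono[of l] by (auto simp: rn_def tn_def)
  qed
  have pr: "p i j * r i l \<le> t l" if "i \<in> {1..m}" "l \<in> P" "j \<in> J" "\<sigma> j = i" for i j l
  proof (cases "L i \<le> t l")
    case True then show ?thesis using pleL[OF that(1,3,4)] by (simp add: r_def)
  next
    case False
    then have Lp: "L i > 0" using tnn that by force
    have "p i j * (t l / L i) \<le> L i * (t l / L i)"
      by (rule mult_right_mono) (use pleL[OF that(1,3,4)] tnn that Lp in auto)
    then show ?thesis using False Lp by (simp add: r_def)
  qed
  have F1: "(\<Sum>i \<in> {1..m}. x i j) = 1" if "j \<in> J" for j
  proof -
    have "\<sigma> j \<in> {1..m}" using assms(8) that by auto
    then show ?thesis unfolding x_def by (simp add: sum.delta)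
  qed
  have F2: "0 \<le> z l i j \<and> 0 \<le> y l i j" if h: "l \<in> P" "i \<in> {1..m}" for l i j
    using r01[OF h(2,1)] by (simp add: z_def y_def x_def)
  have F3: "x i j = z l i j + y l i j" for l i j by (simp add: z_def y_def algebra_simps)
  have F4: "(if nxt \<delta> m l = m + 1 then 0 else z (nxt \<delta> m l) i j) \<le> z l i j" if h: "l \<in> P" "i \<in> {1..m}" for l i j
    unfolding zzeq[OF h(1)] using rn[OF h(2,1)] by (simp add: z_def x_def)
  have F5: "p i j * y l i j \<ge> (p i j - t l) * x i j" if h: "l \<in> P" "i \<in> {1..m}" "j \<in> J" for l i j
    using pr[OF h(2,1,3)] by (simp add: y_def x_def algebra_simps)
  have F6: "(\<Sum>j\<in>J. p i j * (z l i j - (if nxt \<delta> m l = m + 1 then 0 else z (nxt \<delta> m l) i j)))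
       \<le> t l - ext0 m t (nxt \<delta> m l)" if h: "l \<in> P" "i \<in> {1..m}" for l i
  proof -
    have "(\<Sum>j\<in>J. p i j * (z l i j - (if nxt \<delta> m l = m + 1 then 0 else z (nxt \<delta> m l) i j)))
       = (r i l - rn i l) * L i"
      unfolding Lsum z_def using zzeq[OF h(1), unfolded z_def] by (simp add: sum_distrib_left algebra_simps)
    also have "\<dots> = min (L i) (t l) - min (L i) (tn l)" using rL[OF h(2,1)] rn[OF h(2,1)] by (simp add: algebra_simps)
    also have "\<dots> \<le> t l - ext0 m t (nxt \<delta> m l)" unfolding ext[OF h(1)] using tn[OF h(1)] by linarith
    finally show ?thesis .
  qed
  have feas: "olb_feasible \<delta> m J p t x y z"
    unfolding olb_feasible_def Let_def P_def[symmetric]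
    using F1 F2 F3 F4 F5 F6 by (auto simp: x_def)
  have coef: "wt (nxt \<delta> m l) \<le> wt l" if "l \<in> P" for l
  proof (cases "l = m")
    case True then show ?thesis using that assms(6) m1 by (simp add: wt_def sparsify_def nxt_m P_def)
  next
    case False then have "l < m" using lm[OF that] by simp
    then show ?thesis using nxtP[OF that] that assms(7) Psub by (auto simp: wt_def sparsify_def P_def)
  qed
  have obj: "LP_obj \<delta> m J p wt y = (\<Sum>i \<in> {1..m}. h_fun \<delta> m t wt (L i))"
    unfolding LP_obj_def h_fun_def P_def[symmetric]
  proof (rule sum.cong[OF refl], rule sum.cong[OF refl])
    fix i l assume h: "i \<in> {1..m}" "l \<in> P"
    have "(\<Sum>j\<in>J. (wt l - wt (nxt \<delta> m l)) * p i j * y l i j) = (wt l - wt (nxt \<delta> m l)) * ((1 - r i l) * L i)"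
      unfolding Lsum y_def by (simp add: sum_distrib_left algebra_simps)
    also have "(1 - r i l) * L i = max 0 (L i - t l)"
      using rL[OF h] by (simp add: algebra_simps)
    finally show "(\<Sum>j\<in>J. (wt l - wt (nxt \<delta> m l)) * p i j * y l i j) = (wt l - wt (nxt \<delta> m l)) * max 0 (L i - t l)" .
  qed
  have bdd: "bdd_below {LP_obj \<delta> m J p wt y | x y z. olb_feasible \<delta> m J p t x y z}"
  proof (rule bdd_belowI[of _ 0], clarify)
    fix x' y' z' assume f: "olb_feasible \<delta> m J p t x' y' z'"
    show "0 \<le> LP_obj \<delta> m J p wt y'"
      unfolding LP_obj_def P_def[symmetric]
    proof (intro sum_nonneg)
      fix i l j assume h: "i \<in> {1..m}" "l \<in> P" "j \<in> J"
      have "y' l i j \<ge> 0" using f h unfolding olb_feasible_def Let_def P_def by auto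
      then show "0 \<le> (wt l - wt (nxt \<delta> m l)) * p i j * y' l i j"
        using coef[OF h(2)] pnn h by simp
    qed
  qed
  have "LP_obj \<delta> m J p wt y \<in> {LP_obj \<delta> m J p wt y | x y z. olb_feasible \<delta> m J p t x y z}"
    using feas by blast
  from cInf_lower[OF this bdd] obj show ?thesis unfolding wt_def L_def by simp
qed

end
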